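(* Fix $g\in\{0,1\}$ and a maximal lag $p\in\mathbb{N}$. Suppose that there exists at least one lag $h\in\{0,\dots,p\}$ with $\|\mathcal{R}_h\|_{\mathcal{S}}>0$, and that $E\|X_k^{(g')}\|^4<\infty$ for $g'=0,1$. Let $Y_1,\dots,Y_{p+1}$ be consecutive functions from group $\Pi_g$, and classify them with the oracle classifier (built from the true operators $\kappa^{(h)}_{g'}$ and the true discriminative feature functions $\nu_{h,j}$, with fixed dimensions $d_h$ and weights $W(h)>0$). Then the misclassification probability satisfies $$P\big(\Pi_{1-g}\,\big|\,\Pi_g,\{\nu_{h,j}\colon h\ge0,j\ge1\}\big)\le \frac{4\sum_{h=0}^p\Big(W(h)\sum_{i,j=1}^{d_h}\sigma^h_{ij}\Big)}{\sum_{h=0}^p\Big(W(h)\sum_{j=1}^{d_h}\lambda_{hj}\Big)}\wedge 1 .$$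
   Context: Work in $L^2[0,1]$ with inner product $\langle x,y\rangle=\int_0^1x(t)y(t)\,dt$ and norm $\|x\|=\langle x,x\rangle^{1/2}$. For an operator $\Phi$ on $L^2[0,1]$, the Hilbert–Schmidt norm is $\|\Phi\|_{\mathcal{S}}^2=\sum_{i,j}\langle\Phi(e_i),e_j\rangle^2$ for any orthonormal basis $(e_i)$. For each group $g\in\{0,1\}$, $\{X_k^{(g)}\colon k\ge1\}$ is a weakly stationary sequence of random functions in $L^2[0,1]$ with mean function zero. For $h\in\mathbb{N}$ the lag-$h$ (auto-)covariance operators are $C_g^{(h)}(\cdot)=E\{X_k^{(g)}\langle X_{k+h}^{(g)},\cdot\rangle\}$ and $C_g^{(-h)}(\cdot)=E\{X_{k+h}^{(g)}\langle X_k^{(g)},\cdot\rangle\}$, and $\kappa_g^{(h)}=C_g^{(h)}+C_g^{(-h)}$. Let $\mathcal{R}_h=(\kappa_0^{(h)}-\kappa_1^{(h)})^2$, with spectral decomposition $\mathcal{R}_h(\cdot)=\sum_{j\ge1}\lambda_{hj}\langle\nu_{h,j},\cdot\rangle\nu_{h,j}$, $\lambda_{h1}>\lambda_{h2}>\cdots\ge 0$, $\{\nu_{h,j}\}_j$ orthonormal (the discriminative feature functions of lag $h$). A set of consecutive functions $Y_1,\dots,Y_{p+1}$ "from group $\Pi_g$" means they are consecutive elements of a process with the same law as $\{X_k^{(g)}\}$. For $0\le h\le p$ define $$\hat\kappa_{y,h}(\cdot)=\frac{1}{p+1-h}\sum_{k=1}^{p+1-h}\Big(Y_k\langle Y_{k+h},\cdot\rangle+Y_{k+h}\langle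 Y_k,\cdot\rangle\Big),$$ $y^h_{ij}=\langle\hat\kappa_{y,h}(\nu_{h,i}),\nu_{h,j}\rangle$, and $\sigma^h_{ij}=E\{y^h_{ij}-\langle\kappa_g^{(h)}(\nu_{h,i}),\nu_{h,j}\rangle\}^2$ (expectation when the $Y_k$ come from group $g$). The oracle classifier computes, for $g'=0,1$, $D_{g'}=\sum_{h=0}^pW(h)\sum_{i,j=1}^{d_h}\big(\langle\kappa^{(h)}_{g'}(\nu_{h,i}),\nu_{h,j}\rangle-y^h_{ij}\big)^2$ and assigns $Y_1,\dots,Y_{p+1}$ to $\Pi_0$ if $D_0-D_1<0$ and to $\Pi_1$ otherwise. $P(\Pi_{1-g}\mid\Pi_g,\cdot)$ denotes the probability that functions from group $\Pi_g$ are assigned to $\Pi_{1-g}$. $a\wedge b=\min(a,b)$. *)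

theory Defs
  imports "HOL-Probability.Probability"
begin

text \<open>The ambient space L2[0,1] is modelled by an abstract separable real Hilbert space
  (a type of class real_inner, banach, second_countable_topology).
  Random functions are measurable maps from a probability space into it;
  expectations of Hilbert-valued quantities are Bochner integrals.\<close>

text \<open>Lag-h covariance operators (computed at k = 1; by weak stationarity they do not depend on k).\<close>
definition cov_op :: "'w measure \<Rightarrow> (nat \<Rightarrow> 'w \<Rightarrow> 'a::{real_inner,banach,second_countable_topology})
    \<Rightarrow> nat \<Rightarrow> 'a \<Rightarrow> 'a" where
  "cov_op M X h v = (LINT \<omega>|M. inner (X (1 + h) \<omega>) v *\<^sub>R X 1 \<omega>)"

definition cov_op_neg :: "'w measure \<Rightarrow> (nat \<Rightarrow> 'w \<Rightarrow> 'a::{real_inner,banach,second_countable_topology})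
    \<Rightarrow> nat \<Rightarrow> 'a \<Rightarrow> 'a" where
  "cov_op_neg M X h v = (LINT \<omega>|M. inner (X 1 \<omega>) v *\<^sub>R X (1 + h) \<omega>)"

definition kappa :: "'w measure \<Rightarrow> (nat \<Rightarrow> 'w \<Rightarrow> 'a::{real_inner,banach,second_countable_topology})
    \<Rightarrow> nat \<Rightarrow> 'a \<Rightarrow> 'a" where
  "kappa M X h v = cov_op M X h v + cov_op_neg M X h v"

definition weakly_stationary :: "'w measure \<Rightarrow> (nat \<Rightarrow> 'w \<Rightarrow> 'a::{real_inner,banach,second_countable_topology}) \<Rightarrow> bool" where
  "weakly_stationary M X \<longleftrightarrow>
     (\<forall>k\<ge>1. X k \<in> borel_measurable M) \<and>
     (\<forall>k\<ge>1. integrable M (\<lambda>\<omega>. (norm (X k \<omega>))\<^sup>2)) \<and>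
     (\<forall>k\<ge>1. (LINT \<omega>|M. X k \<omega>) = (LINT \<omega>|M. X 1 \<omega>)) \<and>
     (\<forall>k\<ge>1. \<forall>h v. (LINT \<omega>|M. inner (X (k + h) \<omega>) v *\<^sub>R X k \<omega>) = cov_op M X h v \<and>
                   (LINT \<omega>|M. inner (X k \<omega>) v *\<^sub>R X (k + h) \<omega>) = cov_op_neg M X h v)"

definition zero_mean :: "'w measure \<Rightarrow> (nat \<Rightarrow> 'w \<Rightarrow> 'a::{real_inner,banach,second_countable_topology}) \<Rightarrow> bool" where
  "zero_mean M X \<longleftrightarrow> (\<forall>k\<ge>1. integrable M (X k) \<and> (LINT \<omega>|M. X k \<omega>) = 0)"

definition R_op :: "(nat \<Rightarrow> 'w measure) \<Rightarrow> (nat \<Rightarrow> nat \<Rightarrow> 'w \<Rightarrow> 'a::{real_inner,banach,second_countable_topology})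
    \<Rightarrow> nat \<Rightarrow> 'a \<Rightarrow> 'a" where
  "R_op Mg X h = (let D = (\<lambda>v. kappa (Mg 0) (X 0) h v - kappa (Mg 1) (X 1) h v) in D \<circ> D)"

definition is_onb :: "'a::real_inner set \<Rightarrow> bool" where
  "is_onb B \<longleftrightarrow> (\<forall>e\<in>B. norm e = 1) \<and> (\<forall>e\<in>B. \<forall>f\<in>B. e \<noteq> f \<longrightarrow> inner e f = 0)
               \<and> closure (span B) = UNIV"

definition hs_norm :: "('a::real_inner \<Rightarrow> 'a) \<Rightarrow> real" where
  "hs_norm \<Phi> = (let B = (SOME B. is_onb B) in
     sqrt (infsum (\<lambda>(e, f). (inner (\<Phi> e) f)\<^sup>2) (B \<times> B)))"

definition spectral_decomp :: "('a::real_inner \<Rightarrow> 'a) \<Rightarrow> (nat \<Rightarrow> 'a) \<Rightarrow> (nat \<Rightarrow> real) \<Rightarrow> bool" where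
  "spectral_decomp T nu l \<longleftrightarrow>
     (\<forall>i\<ge>1. \<forall>j\<ge>1. inner (nu i) (nu j) = (if i = j then 1 else 0)) \<and>
     (\<forall>j\<ge>1. 0 \<le> l j \<and> l (Suc j) \<le> l j \<and> (0 < l (Suc j) \<longrightarrow> l (Suc j) < l j)) \<and>
     (\<forall>v. (\<lambda>n. (l (Suc n) * inner (nu (Suc n)) v) *\<^sub>R nu (Suc n)) sums T v)"

definition kappa_hat :: "nat \<Rightarrow> (nat \<Rightarrow> 'a::real_inner) \<Rightarrow> nat \<Rightarrow> 'a \<Rightarrow> 'a" where
  "kappa_hat p y h v = (1 / real (p + 1 - h)) *\<^sub>R
     (\<Sum>k = 1..p + 1 - h. inner (y (k + h)) v *\<^sub>R y k + inner (y k) v *\<^sub>R y (k + h))"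

definition yfeat :: "nat \<Rightarrow> (nat \<Rightarrow> nat \<Rightarrow> 'a::real_inner) \<Rightarrow> (nat \<Rightarrow> 'a) \<Rightarrow> nat \<Rightarrow> nat \<Rightarrow> nat \<Rightarrow> real" where
  "yfeat p \<nu> y h i j = inner (kappa_hat p y h (\<nu> h i)) (\<nu> h j)"

definition Dstat :: "(nat \<Rightarrow> 'w measure) \<Rightarrow> (nat \<Rightarrow> nat \<Rightarrow> 'w \<Rightarrow> 'a::{real_inner,banach,second_countable_topology})
    \<Rightarrow> (nat \<Rightarrow> real) \<Rightarrow> (nat \<Rightarrow> nat) \<Rightarrow> (nat \<Rightarrow> nat \<Rightarrow> 'a) \<Rightarrow> nat \<Rightarrow> (nat \<Rightarrow> 'a) \<Rightarrow> nat \<Rightarrow> real" where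
  "Dstat Mg X W d \<nu> p y g' = (\<Sum>h = 0..p. W h * (\<Sum>i = 1..d h. \<Sum>j = 1..d h.
      (inner (kappa (Mg g') (X g') h (\<nu> h i)) (\<nu> h j) - yfeat p \<nu> y h i j)\<^sup>2))"

definition oracle_class :: "(nat \<Rightarrow> 'w measure) \<Rightarrow> (nat \<Rightarrow> nat \<Rightarrow> 'w \<Rightarrow> 'a::{real_inner,banach,second_countable_topology})
    \<Rightarrow> (nat \<Rightarrow> real) \<Rightarrow> (nat \<Rightarrow> nat) \<Rightarrow> (nat \<Rightarrow> nat \<Rightarrow> 'a) \<Rightarrow> nat \<Rightarrow> (nat \<Rightarrow> 'a) \<Rightarrow> nat" where
  "oracle_class Mg X W d \<nu> p y =
     (if Dstat Mg X W d \<nu> p y 0 - Dstat Mg X W d \<nu> p y 1 < 0 then 0 else 1)"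

text \<open>sigma^h_{ij} = E (y^h_{ij} - <kappa_g^(h) nu_{h,i}, nu_{h,j}>)^2, for the sample Y_k = Z_{m+k}.\<close>
definition sigma :: "'v measure \<Rightarrow> (nat \<Rightarrow> 'v \<Rightarrow> 'a) \<Rightarrow> nat \<Rightarrow>
    (nat \<Rightarrow> 'w measure) \<Rightarrow> (nat \<Rightarrow> nat \<Rightarrow> 'w \<Rightarrow> 'a::{real_inner,banach,second_countable_topology})
    \<Rightarrow> nat \<Rightarrow> nat \<Rightarrow> (nat \<Rightarrow> nat \<Rightarrow> 'a) \<Rightarrow> nat \<Rightarrow> nat \<Rightarrow> nat \<Rightarrow> real" where
  "sigma M Z m Mg X g p \<nu> h i j = (LINT \<omega>|M.
     (yfeat p \<nu> (\<lambda>k. Z (m + k) \<omega>) h i j - inner (kappa (Mg g) (X g) h (\<nu> h i)) (\<nu> h j))\<^sup>2)"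

end

theory Submission
  imports Defs
begin


lemma distr_nonmeas_emeasure:
  assumes eq: "distr M N F = distr K N G" and pM: "prob_space M"
    and FM: "F \<in> measurable M N" and A: "A \<in> sets N"
  shows "emeasure (distr K N G) A = emeasure K (G -` A \<inter> space K)"
proof -
  have sp: "emeasure (distr K N G) (space N) = 1"
    using eq prob_space.emeasure_space_1[OF prob_space.prob_space_distr[OF pM FM]] by simp
  let ?mu = "\<lambda>A. emeasure K (G -` A \<inter> space K)"
  have ss: "sigma_sets (space N) (sets N) = sets N"
    by (simp add: sigma_algebra.sigma_sets_eq sets.sigma_algebra_axioms)
  have "emeasure (distr K N G) (space N) = (if space N \<in> sets N \<and> measure_space (space N) (sets N) ?mu then ?mu (space N) else 0)"
    unfolding distr_def emeasure_measure_of_conv ss by simp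
  with sp have ms: "measure_space (space N) (sets N) ?mu"
    by (metis zero_neq_one)
  show ?thesis
    unfolding distr_def emeasure_measure_of_conv ss using ms A by simp
qed

lemma law_transfer:
  fixes Z :: "nat \<Rightarrow> 'v \<Rightarrow> 'a::{real_normed_vector,second_countable_topology}"
  assumes pM: "prob_space M" and Zm: "\<And>k. Z k \<in> borel_measurable M"
    and eq: "distr M (PiM UNIV (\<lambda>_. borel)) (\<lambda>\<omega> k. Z k \<omega>)
         = distr K (PiM UNIV (\<lambda>_. borel)) (\<lambda>\<omega> k. X k \<omega>)"
    and Xm: "X k \<in> borel_measurable K"
  shows "distr M borel (Z k) = distr K borel (X k)"
proof (rule measure_eqI)
  fix B :: "'a set" assume B: "B \<in> sets (distr M borel (Z k))"
  hence B': "B \<in> sets borel" by simp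
  let ?N = "PiM UNIV (\<lambda>_. borel) :: (nat \<Rightarrow> 'a) measure"
  have Fm: "(\<lambda>\<omega> k. Z k \<omega>) \<in> measurable M ?N"
    by (rule measurable_PiM_single') (auto simp: Zm)
  let ?A = "(\<lambda>x. x k) -` B \<inter> space ?N"
  have A: "?A \<in> sets ?N" using B' by (auto intro: measurable_sets measurable_component_singleton)
  have "emeasure (distr M borel (Z k)) B = emeasure M (Z k -` B \<inter> space M)"
    using B' Zm by (simp add: emeasure_distr)
  also have "\<dots> = emeasure (distr M ?N (\<lambda>\<omega> k. Z k \<omega>)) ?A"
    using emeasure_distr[OF Fm A] by (simp add: space_PiM vimage_def)
  also have "\<dots> = emeasure (distr K ?N (\<lambda>\<omega> k. X k \<omega>)) ?A" using eq by simp
  also have "\<dots> = emeasure K ((\<lambda>\<omega> k. X k \<omega>) -` ?A \<inter> space K)"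
    by (rule distr_nonmeas_emeasure[OF eq pM Fm A])
  also have "\<dots> = emeasure K (X k -` B \<inter> space K)" by (simp add: space_PiM vimage_def)
  also have "\<dots> = emeasure (distr K borel (X k)) B" using B' Xm by (simp add: emeasure_distr)
  finally show "emeasure (distr M borel (Z k)) B = emeasure (distr K borel (X k)) B" .
qed simp



lemma spec_strict:
  assumes sd: "spectral_decomp T nu l" and a: "a \<ge> 1"
  shows "0 < l (a + Suc n) \<Longrightarrow> l (a + Suc n) < l a"
proof (induction n)
  case 0
  then show ?case using sd a unfolding spectral_decomp_def by auto
next
  case (Suc n)
  have j: "a + Suc n \<ge> 1" using a by simp
  have "0 < l (Suc (a + Suc n)) \<longrightarrow> l (Suc (a + Suc n)) < l (a + Suc n)"
    using sd j unfolding spectral_decomp_def by blast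
  hence "l (a + Suc (Suc n)) < l (a + Suc n)" using Suc.prems by simp
  moreover have "l (a + Suc n) > 0" using Suc.prems calculation by linarith
  ultimately show ?case using Suc.IH by linarith
qed

lemma spec_distinct:
  assumes sd: "spectral_decomp T nu l" and i: "i \<ge> 1" and k: "k \<ge> 1" and ne: "k \<noteq> i"
    and pos: "0 < l i"
  shows "l k \<noteq> l i"
proof (cases "k < i")
  case True
  obtain n where "i = Suc (k + n)" using less_imp_Suc_add[OF True] by blast
  hence "i = k + Suc n" by simp
  then show ?thesis using spec_strict[OF sd k, of n] pos by auto
next
  case False
  have "i < k" using False ne by simp
  then obtain n where "k = Suc (i + n)" using less_imp_Suc_add by blast
  hence n: "k = i + Suc n" by simp
  show ?thesis
  proof (cases "0 < l k")
    case True then show ?thesis using spec_strict[OF sd i, of n] n by auto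
  next
    case False then show ?thesis using pos by auto
  qed
qed

lemma spec_apply_nu:
  assumes sd: "spectral_decomp T nu l" and i: "i \<ge> 1"
  shows "T (nu i) = l i *\<^sub>R nu i"
proof -
  have orth: "\<And>a b. a \<ge> 1 \<Longrightarrow> b \<ge> 1 \<Longrightarrow> inner (nu a) (nu b) = (if a = b then 1 else 0)"
    using sd unfolding spectral_decomp_def by auto
  have s: "(\<lambda>n. (l (Suc n) * inner (nu (Suc n)) (nu i)) *\<^sub>R nu (Suc n)) sums T (nu i)"
    using sd unfolding spectral_decomp_def by auto
  have eq: "(\<lambda>n. (l (Suc n) * inner (nu (Suc n)) (nu i)) *\<^sub>R nu (Suc n))
      = (\<lambda>n. if n = i - 1 then l i *\<^sub>R nu i else 0)"
    by (rule ext, case_tac "Suc n = i") (use i in \<open>auto simp: orth\<close>)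
  have "(\<lambda>n. if n = i - 1 then l i *\<^sub>R nu i else 0) sums (l i *\<^sub>R nu i)"
    using sums_single[of "i - 1" "\<lambda>_. l i *\<^sub>R nu i"] by simp
  with s[unfolded eq] show ?thesis by (rule sums_unique2)
qed

lemma spec_inner:
  assumes sd: "spectral_decomp T nu l" and k: "k \<ge> 1"
  shows "inner (T w) (nu k) = l k * inner (nu k) w"
proof -
  have orth: "\<And>a b. a \<ge> 1 \<Longrightarrow> b \<ge> 1 \<Longrightarrow> inner (nu a) (nu b) = (if a = b then 1 else 0)"
    using sd unfolding spectral_decomp_def by auto
  have s: "(\<lambda>n. (l (Suc n) * inner (nu (Suc n)) w) *\<^sub>R nu (Suc n)) sums T w"
    using sd unfolding spectral_decomp_def by auto
  have s2: "(\<lambda>n. inner ((l (Suc n) * inner (nu (Suc n)) w) *\<^sub>R nu (Suc n)) (nu k)) sums inner (T w) (nu k)"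
    by (rule bounded_linear.sums[OF bounded_linear_inner_left s])
  have eq: "(\<lambda>n. inner ((l (Suc n) * inner (nu (Suc n)) w) *\<^sub>R nu (Suc n)) (nu k))
      = (\<lambda>n. if n = k - 1 then l k * inner (nu k) w else 0)"
    by (rule ext, case_tac "Suc n = k") (use k in \<open>auto simp: orth\<close>)
  have "(\<lambda>n. if n = k - 1 then l k * inner (nu k) w else 0) sums (l k * inner (nu k) w)"
    using sums_single[of "k - 1" "\<lambda>_. l k * inner (nu k) w"] by simp
  with s2[unfolded eq] show ?thesis by (rule sums_unique2)
qed

lemma eigen_bound:
  fixes D :: "'a::real_inner \<Rightarrow> 'a"
  assumes sym: "\<And>u v. inner (D u) v = inner u (D v)"
    and scale: "\<And>c v. D (c *\<^sub>R v) = c *\<^sub>R D v"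
    and sd: "spectral_decomp (D \<circ> D) nu l" and i: "i \<ge> 1"
  shows "l i \<le> (inner (D (nu i)) (nu i))\<^sup>2"
proof (cases "l i > 0")
  case False then show ?thesis by (smt (verit) zero_le_power2)
next
  case pos: True
  define T where "T = D \<circ> D"
  have orth: "\<And>a b. a \<ge> 1 \<Longrightarrow> b \<ge> 1 \<Longrightarrow> inner (nu a) (nu b) = (if a = b then 1 else 0)"
    using sd unfolding spectral_decomp_def by auto
  have Tnu: "D (D (nu i)) = l i *\<^sub>R nu i" using spec_apply_nu[OF sd i] by simp
  define w where "w = D (nu i)"
  have Tw: "T w = l i *\<^sub>R w" unfolding T_def w_def by (simp add: Tnu scale)
  have zero: "inner (nu k) w = 0" if k: "k \<ge> 1" "k \<noteq> i" for k
  proof -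
    have "inner (T w) (nu k) = l k * inner (nu k) w" using spec_inner[OF sd[folded T_def] k(1)] .
    also have "inner (T w) (nu k) = l i * inner (nu k) w" by (simp add: Tw inner_commute)
    finally have "(l i - l k) * inner (nu k) w = 0" by (simp add: algebra_simps)
    moreover have "l k \<noteq> l i" using spec_distinct[OF sd i k pos] .
    ultimately show ?thesis by simp
  qed
  have s: "(\<lambda>n. (l (Suc n) * inner (nu (Suc n)) w) *\<^sub>R nu (Suc n)) sums T w"
    using sd unfolding spectral_decomp_def T_def by auto
  have eq: "(\<lambda>n. (l (Suc n) * inner (nu (Suc n)) w) *\<^sub>R nu (Suc n))
      = (\<lambda>n. if n = i - 1 then (l i * inner (nu i) w) *\<^sub>R nu i else 0)"
    by (rule ext, case_tac "Suc n = i") (use i in \<open>auto simp: zero\<close>)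
  have "(\<lambda>n. if n = i - 1 then (l i * inner (nu i) w) *\<^sub>R nu i else 0) sums ((l i * inner (nu i) w) *\<^sub>R nu i)"
    using sums_single[of "i - 1" "\<lambda>_. (l i * inner (nu i) w) *\<^sub>R nu i"] by simp
  with s[unfolded eq] have "T w = (l i * inner (nu i) w) *\<^sub>R nu i" by (rule sums_unique2)
  with Tw have "l i *\<^sub>R w = l i *\<^sub>R (inner (nu i) w *\<^sub>R nu i)" by simp
  hence "w = inner (nu i) w *\<^sub>R nu i \<or> l i = 0" by (simp only: scaleR_cancel_left)
  hence wE: "w = inner (nu i) w *\<^sub>R nu i" using pos by simp
  have "inner w w = inner (inner (nu i) w *\<^sub>R nu i) (inner (nu i) w *\<^sub>R nu i)"
    using arg_cong2[where f=inner, OF wE wE] .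
  also have "\<dots> = (inner (nu i) w)\<^sup>2" using orth[OF i i] by (simp add: power2_eq_square)
  finally have "inner w w = (inner (nu i) w)\<^sup>2" .
  moreover have "inner w w = l i"
  proof -
    have "inner w w = inner (D w) (nu i)" unfolding w_def by (simp add: sym)
    also have "\<dots> = l i" using Tnu orth[OF i i] by (simp add: w_def)
    finally show ?thesis .
  qed
  ultimately show ?thesis by (simp add: w_def inner_commute)
qed

lemma spec_zero:
  assumes sd: "spectral_decomp T nu l" and l1: "l 1 = 0"
  shows "T v = 0"
proof -
  have "l (Suc n) = 0" for n
  proof (induction n)
    case 0 then show ?case using l1 by simp
  next
    case (Suc n)
    have "0 \<le> l (Suc (Suc n))" "l (Suc (Suc n)) \<le> l (Suc n)"
      using sd unfolding spectral_decomp_def by auto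
    then show ?case using Suc.IH by linarith
  qed
  hence "(\<lambda>n. (l (Suc n) * inner (nu (Suc n)) v) *\<^sub>R nu (Suc n)) = (\<lambda>n. 0)" by simp
  moreover have "(\<lambda>n. (l (Suc n) * inner (nu (Suc n)) v) *\<^sub>R nu (Suc n)) sums T v"
    using sd unfolding spectral_decomp_def by auto
  ultimately have "(\<lambda>n. 0) sums T v" by simp
  from sums_unique2[OF sums_zero this] show ?thesis by simp
qed

lemma hs_zero: "(\<And>v. T v = 0) \<Longrightarrow> hs_norm T = 0"
  unfolding hs_norm_def Let_def by (auto intro!: infsum_0)



lemma cov_int:
  fixes A B :: "'w \<Rightarrow> 'a::{real_inner,banach,second_countable_topology}"
  assumes [measurable]: "A \<in> borel_measurable M" "B \<in> borel_measurable M"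
    and iA: "integrable M (\<lambda>\<omega>. (norm (A \<omega>))\<^sup>2)" and iB: "integrable M (\<lambda>\<omega>. (norm (B \<omega>))\<^sup>2)"
  shows "integrable M (\<lambda>\<omega>. inner (A \<omega>) v *\<^sub>R B \<omega>)"
proof (rule Bochner_Integration.integrable_bound[where f="\<lambda>\<omega>. norm v * ((norm (A \<omega>))\<^sup>2 + (norm (B \<omega>))\<^sup>2)"])
  show "integrable M (\<lambda>\<omega>. norm v * ((norm (A \<omega>))\<^sup>2 + (norm (B \<omega>))\<^sup>2))"
    using iA iB by auto
  show "(\<lambda>\<omega>. inner (A \<omega>) v *\<^sub>R B \<omega>) \<in> borel_measurable M" by measurable
  show "AE \<omega> in M. norm (inner (A \<omega>) v *\<^sub>R B \<omega>) \<le> norm (norm v * ((norm (A \<omega>))\<^sup>2 + (norm (B \<omega>))\<^sup>2))"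
  proof (rule AE_I2)
    fix \<omega>
    let ?a = "norm (A \<omega>)" and ?b = "norm (B \<omega>)"
    have c: "\<bar>inner (A \<omega>) v\<bar> \<le> ?a * norm v" by (rule Cauchy_Schwarz_ineq2)
    have "0 \<le> (?a - ?b)\<^sup>2" by simp
    hence "2 * ?a * ?b \<le> ?a\<^sup>2 + ?b\<^sup>2" unfolding power2_diff by linarith
    moreover have "0 \<le> ?a * ?b" by simp
    ultimately have ab: "?a * ?b \<le> ?a\<^sup>2 + ?b\<^sup>2" by linarith
    have "norm (inner (A \<omega>) v *\<^sub>R B \<omega>) = \<bar>inner (A \<omega>) v\<bar> * ?b" by simp
    also have "\<dots> \<le> ?a * norm v * ?b" using c by (simp add: mult_right_mono)
    also have "\<dots> = norm v * (?a * ?b)" by (simp add: algebra_simps)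
    also have "\<dots> \<le> norm v * (?a\<^sup>2 + ?b\<^sup>2)" using ab by (rule mult_left_mono) simp
    also have "\<dots> = norm (norm v * (?a\<^sup>2 + ?b\<^sup>2))" by simp
    finally show "norm (inner (A \<omega>) v *\<^sub>R B \<omega>) \<le> norm (norm v * (?a\<^sup>2 + ?b\<^sup>2))" .
  qed
qed

locale stat_proc =
  fixes M :: "'w measure" and X :: "nat \<Rightarrow> 'w \<Rightarrow> 'a::{real_inner,banach,second_countable_topology}"
  assumes ws: "weakly_stationary M X"
begin

lemma meas: "k \<ge> 1 \<Longrightarrow> X k \<in> borel_measurable M"
  using ws unfolding weakly_stationary_def by auto
lemma sqi: "k \<ge> 1 \<Longrightarrow> integrable M (\<lambda>\<omega>. (norm (X k \<omega>))\<^sup>2)"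
  using ws unfolding weakly_stationary_def by auto

lemma cint: "a \<ge> 1 \<Longrightarrow> b \<ge> 1 \<Longrightarrow> integrable M (\<lambda>\<omega>. inner (X a \<omega>) v *\<^sub>R X b \<omega>)"
  by (rule cov_int[OF meas meas sqi sqi])

lemma kappa_sym: "inner (kappa M X h u) v = inner u (kappa M X h v)"
proof -
  have i1: "integrable M (\<lambda>\<omega>. inner (X (1 + h) \<omega>) w *\<^sub>R X 1 \<omega>)" for w by (rule cint) auto
  have i2: "integrable M (\<lambda>\<omega>. inner (X 1 \<omega>) w *\<^sub>R X (1 + h) \<omega>)" for w by (rule cint) auto
  have c1: "inner (cov_op M X h w) z = (LINT \<omega>|M. inner (X (1 + h) \<omega>) w * inner (X 1 \<omega>) z)" for w z
  proof -
    have "inner (cov_op M X h w) z = (LINT \<omega>|M. inner (inner (X (1 + h) \<omega>) w *\<^sub>R X 1 \<omega>) z)"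
      unfolding cov_op_def by (rule integral_inner_left[symmetric]) (rule i1)
    then show ?thesis by simp
  qed
  have c2: "inner (cov_op_neg M X h w) z = (LINT \<omega>|M. inner (X 1 \<omega>) w * inner (X (1 + h) \<omega>) z)" for w z
  proof -
    have "inner (cov_op_neg M X h w) z = (LINT \<omega>|M. inner (inner (X 1 \<omega>) w *\<^sub>R X (1 + h) \<omega>) z)"
      unfolding cov_op_neg_def by (rule integral_inner_left[symmetric]) (rule i2)
    then show ?thesis by simp
  qed
  have "inner (kappa M X h u) v = inner (cov_op M X h u) v + inner (cov_op_neg M X h u) v"
    unfolding kappa_def inner_add_left ..
  also have "\<dots> = inner (cov_op M X h v) u + inner (cov_op_neg M X h v) u"
    unfolding c1 c2 by (simp add: mult.commute)
  also have "\<dots> = inner u (kappa M X h v)"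
    unfolding kappa_def inner_add_left inner_add_right by (simp add: inner_commute)
  finally show ?thesis .
qed

lemma kappa_scale: "kappa M X h (c *\<^sub>R v) = c *\<^sub>R kappa M X h v"
  unfolding kappa_def cov_op_def cov_op_neg_def
  by (simp add: scaleR_add_right flip: scaleR_scaleR)

end



definition L2 :: "'w measure \<Rightarrow> ('w \<Rightarrow> real) \<Rightarrow> bool" where
  "L2 M f \<longleftrightarrow> f \<in> borel_measurable M \<and> integrable M (\<lambda>x. (f x)\<^sup>2)"

lemma L2_add:
  assumes "L2 M f" "L2 M g" shows "L2 M (\<lambda>x. f x + g x)"
  unfolding L2_def
proof
  have [measurable]: "f \<in> borel_measurable M" "g \<in> borel_measurable M" using assms L2_def by auto
  show "(\<lambda>x. f x + g x) \<in> borel_measurable M" by measurable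
  show "integrable M (\<lambda>x. (f x + g x)\<^sup>2)"
  proof (rule Bochner_Integration.integrable_bound[where f="\<lambda>x. 2 * (f x)\<^sup>2 + 2 * (g x)\<^sup>2"])
    show "integrable M (\<lambda>x. 2 * (f x)\<^sup>2 + 2 * (g x)\<^sup>2)"
      by (intro Bochner_Integration.integrable_add integrable_mult_right) (use assms in \<open>auto simp: L2_def\<close>)
    show "(\<lambda>x. (f x + g x)\<^sup>2) \<in> borel_measurable M" by measurable
    show "AE x in M. norm ((f x + g x)\<^sup>2) \<le> norm (2 * (f x)\<^sup>2 + 2 * (g x)\<^sup>2)"
    proof (rule AE_I2)
      fix x
      have "0 \<le> (f x - g x)\<^sup>2" by simp
      hence "(f x + g x)\<^sup>2 \<le> 2 * (f x)\<^sup>2 + 2 * (g x)\<^sup>2" unfolding power2_diff power2_sum by linarith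
      moreover have "0 \<le> 2 * (f x)\<^sup>2 + 2 * (g x)\<^sup>2" by simp
      ultimately show "norm ((f x + g x)\<^sup>2) \<le> norm (2 * (f x)\<^sup>2 + 2 * (g x)\<^sup>2)" by simp
    qed
  qed
qed

lemma L2_cmult: "L2 M f \<Longrightarrow> L2 M (\<lambda>x. c * f x)"
  unfolding L2_def by (auto simp: power_mult_distrib)

lemma L2_const: "finite_measure M \<Longrightarrow> L2 M (\<lambda>x. c)"
  unfolding L2_def by (auto simp: finite_measure.integrable_const)

lemma L2_diff: "L2 M f \<Longrightarrow> L2 M g \<Longrightarrow> L2 M (\<lambda>x. f x - g x)"
  using L2_add[of M f "\<lambda>x. (-1) * g x"] L2_cmult[of M g "-1"] by simp

lemma L2_sum: "finite I \<Longrightarrow> finite_measure M \<Longrightarrow> (\<And>i. i \<in> I \<Longrightarrow> L2 M (f i)) \<Longrightarrow> L2 M (\<lambda>x. \<Sum>i\<in>I. f i x)"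
proof (induction I rule: finite_induct)
  case empty then show ?case using L2_const[of M 0] by simp
next
  case (insert a I) then show ?case using L2_add[of M "f a" "\<lambda>x. \<Sum>i\<in>I. f i x"] by simp
qed

lemma L2_prod:
  assumes [measurable]: "f \<in> borel_measurable M" "g \<in> borel_measurable M"
    and "integrable M (\<lambda>x. (f x)^4)" "integrable M (\<lambda>x. (g x)^4)"
  shows "L2 M (\<lambda>x. f x * g x)"
  unfolding L2_def
proof
  show "(\<lambda>x. f x * g x) \<in> borel_measurable M" by measurable
  show "integrable M (\<lambda>x. (f x * g x)\<^sup>2)"
  proof (rule Bochner_Integration.integrable_bound[where f="\<lambda>x. (f x)^4 + (g x)^4"])
    show "integrable M (\<lambda>x. (f x)^4 + (g x)^4)" using assms by auto
    show "(\<lambda>x. (f x * g x)\<^sup>2) \<in> borel_measurable M" by measurable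
    show "AE x in M. norm ((f x * g x)\<^sup>2) \<le> norm ((f x)^4 + (g x)^4)"
    proof (rule AE_I2)
      fix x
      have "0 \<le> ((f x)\<^sup>2 - (g x)\<^sup>2)\<^sup>2" by simp
      hence "2 * ((f x)\<^sup>2 * (g x)\<^sup>2) \<le> (f x)^4 + (g x)^4"
        by (simp add: power2_diff power_mult[symmetric] algebra_simps)
      moreover have "0 \<le> (f x)\<^sup>2 * (g x)\<^sup>2" by simp
      ultimately have le: "(f x * g x)\<^sup>2 \<le> (f x)^4 + (g x)^4"
        unfolding power_mult_distrib by linarith
      have n1: "0 \<le> (f x)^4 + (g x)^4"
        by (intro add_nonneg_nonneg zero_le_even_power) auto
      show "norm ((f x * g x)\<^sup>2) \<le> norm ((f x)^4 + (g x)^4)"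
        using le n1 by simp
    qed
  qed
qed

lemma inner4:
  fixes Y :: "'w \<Rightarrow> 'a::{real_inner,banach,second_countable_topology}"
  assumes [measurable]: "Y \<in> borel_measurable M" and i: "integrable M (\<lambda>x. norm (Y x) ^ 4)"
  shows "integrable M (\<lambda>x. (inner (Y x) v)^4)"
proof (rule Bochner_Integration.integrable_bound[where f="\<lambda>x. (norm v)^4 * norm (Y x) ^ 4"])
  show "integrable M (\<lambda>x. (norm v)^4 * norm (Y x) ^ 4)" using i by auto
  show "(\<lambda>x. (inner (Y x) v)^4) \<in> borel_measurable M" by measurable
  show "AE x in M. norm ((inner (Y x) v)^4) \<le> norm ((norm v)^4 * norm (Y x) ^ 4)"
  proof (rule AE_I2)
    fix x
    have "\<bar>inner (Y x) v\<bar> \<le> norm (Y x) * norm v" by (rule Cauchy_Schwarz_ineq2)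
    hence "\<bar>inner (Y x) v\<bar>^4 \<le> (norm (Y x) * norm v)^4" by (rule power_mono) simp
    thus "norm ((inner (Y x) v)^4) \<le> norm ((norm v)^4 * norm (Y x) ^ 4)"
      by (simp add: power_abs power_mult_distrib mult.commute)
  qed
qed

lemma yfeat_expand:
  "yfeat p \<nu> y h i j = (1 / real (p + 1 - h)) *
     (\<Sum>k = 1..p + 1 - h. inner (y (k + h)) (\<nu> h i) * inner (y k) (\<nu> h j)
                          + inner (y k) (\<nu> h i) * inner (y (k + h)) (\<nu> h j))"
  unfolding yfeat_def kappa_hat_def
  by (simp add: inner_sum_left inner_add_left)

lemma L2_yfeat:
  fixes Z :: "nat \<Rightarrow> 'w \<Rightarrow> 'a::{real_inner,banach,second_countable_topology}"
  assumes fm: "finite_measure M" and Zm: "\<And>k. Z k \<in> borel_measurable M"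
    and Z4: "\<And>k. k \<ge> 1 \<Longrightarrow> integrable M (\<lambda>x. norm (Z k x) ^ 4)"
  shows "L2 M (\<lambda>x. yfeat p \<nu> (\<lambda>k. Z (m + k) x) h i j)"
proof -
  have i4: "integrable M (\<lambda>x. (inner (Z k x) v)^4)" if "k \<ge> 1" for k v
    by (rule inner4[OF Zm Z4[OF that]])
  have zm[measurable]: "(\<lambda>x. inner (Z k x) v) \<in> borel_measurable M" for k v
    using Zm[of k] by measurable
  have "L2 M (\<lambda>x. \<Sum>k = 1..p + 1 - h. inner (Z (m + (k + h)) x) (\<nu> h i) * inner (Z (m + k) x) (\<nu> h j)
                          + inner (Z (m + k) x) (\<nu> h i) * inner (Z (m + (k + h)) x) (\<nu> h j))"
    by (rule L2_sum[OF _ fm]) (auto intro!: L2_add L2_prod i4)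
  from L2_cmult[OF this, of "1 / real (p + 1 - h)"] show ?thesis
    by (simp add: yfeat_expand)
qed

lemma Z4_transfer:
  fixes Z :: "nat \<Rightarrow> 'v \<Rightarrow> 'a::{real_inner,banach,second_countable_topology}"
  assumes pM: "prob_space M" and Zm: "\<And>k. Z k \<in> borel_measurable M"
    and eq: "distr M (PiM UNIV (\<lambda>_. borel)) (\<lambda>\<omega> k. Z k \<omega>)
         = distr K (PiM UNIV (\<lambda>_. borel)) (\<lambda>\<omega> k. X k \<omega>)"
    and Xm: "X k \<in> borel_measurable K"
    and Xi: "integrable K (\<lambda>\<omega>. norm (X k \<omega>) ^ 4)"
  shows "integrable M (\<lambda>\<omega>. norm (Z k \<omega>) ^ 4)"
proof -
  have d: "distr M borel (Z k) = distr K borel (X k)" by (rule law_transfer[OF pM Zm eq Xm])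
  have fm: "(\<lambda>x::'a. norm x ^ 4) \<in> borel_measurable borel" by measurable
  have "integrable (distr K borel (X k)) (\<lambda>x. norm x ^ 4)"
    using integrable_distr_eq[OF Xm fm] Xi by simp
  hence "integrable (distr M borel (Z k)) (\<lambda>x. norm x ^ 4)" using d by simp
  thus ?thesis using integrable_distr_eq[OF Zm fm] by simp
qed

lemma pointwise_ineq:
  fixes a b y :: real
  shows "(b - y)\<^sup>2 \<ge> (b - a)\<^sup>2 / 2 - 2 * (y - a)\<^sup>2 + (a - y)\<^sup>2"
proof -
  have e: "(b - y)\<^sup>2 - ((b - a)\<^sup>2 / 2 - 2 * (y - a)\<^sup>2 + (a - y)\<^sup>2) = ((b - a) - 2 * (y - a))\<^sup>2 / 2"
    unfolding power2_eq_square by (simp add: field_simps; algebra)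
  have "0 \<le> ((b - a) - 2 * (y - a))\<^sup>2 / 2" by simp
  thus ?thesis using e by linarith
qed

theorem theorem1:
  fixes Mg :: "nat \<Rightarrow> 'w measure"
    and X :: "nat \<Rightarrow> nat \<Rightarrow> 'w \<Rightarrow> 'a::{real_inner,banach,second_countable_topology}"
    and M :: "'v measure" and Z :: "nat \<Rightarrow> 'v \<Rightarrow> 'a" and m :: nat
    and g p :: nat
    and \<nu> :: "nat \<Rightarrow> nat \<Rightarrow> 'a" and lam :: "nat \<Rightarrow> nat \<Rightarrow> real"
    and d :: "nat \<Rightarrow> nat" and W :: "nat \<Rightarrow> real"
  assumes "g \<le> 1"
    and "\<And>g'. g' \<le> 1 \<Longrightarrow> prob_space (Mg g')"
    and "\<And>g'. g' \<le> 1 \<Longrightarrow> weakly_stationary (Mg g') (X g')"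
    and "\<And>g'. g' \<le> 1 \<Longrightarrow> zero_mean (Mg g') (X g')"
    and "\<And>g' k. g' \<le> 1 \<Longrightarrow> k \<ge> 1 \<Longrightarrow> integrable (Mg g') (\<lambda>\<omega>. norm (X g' k \<omega>) ^ 4)"
    and "\<And>h. h \<le> p \<Longrightarrow> spectral_decomp (R_op Mg X h) (\<nu> h) (lam h)"
    and "\<exists>h\<le>p. hs_norm (R_op Mg X h) > 0"
    and "\<And>h. h \<le> p \<Longrightarrow> W h > 0"
    and "\<And>h. h \<le> p \<Longrightarrow> d h \<ge> 1"
    and "prob_space M"
    and "\<And>k. Z k \<in> borel_measurable M"
    and "distr M (PiM UNIV (\<lambda>_. borel)) (\<lambda>\<omega> k. Z k \<omega>)
         = distr (Mg g) (PiM UNIV (\<lambda>_. borel)) (\<lambda>\<omega> k. X g k \<omega>)"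
  shows "measure M {\<omega> \<in> space M. oracle_class Mg X W d \<nu> p (\<lambda>k. Z (m + k) \<omega>) \<noteq> g}
         \<le> min (4 * (\<Sum>h = 0..p. W h * (\<Sum>i = 1..d h. \<Sum>j = 1..d h. sigma M Z m Mg X g p \<nu> h i j))
                  / (\<Sum>h = 0..p. W h * (\<Sum>j = 1..d h. lam h j))) 1"
proof -
  note g1 = assms(1) and ws = assms(3) and X4 = assms(5) and sd = assms(6) and hs = assms(7)
    and Wpos = assms(8) and d1 = assms(9) and pM = assms(10) and Zm = assms(11) and eq = assms(12)
  interpret P: prob_space M by (rule pM)
  interpret S0: stat_proc "Mg 0" "X 0" by unfold_locales (rule ws, simp)
  interpret S1: stat_proc "Mg 1" "X 1" by unfold_locales (rule ws, simp)
  define Dop where "Dop h v = kappa (Mg 0) (X 0) h v - kappa (Mg 1) (X 1) h v" for h v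
  have Dsym: "inner (Dop h u) v = inner u (Dop h v)" for h u v
    unfolding Dop_def inner_diff_left inner_diff_right S0.kappa_sym S1.kappa_sym ..
  have Dscale: "Dop h (c *\<^sub>R v) = c *\<^sub>R Dop h v" for h c v
    unfolding Dop_def S0.kappa_scale S1.kappa_scale by (simp add: scaleR_diff_right)
  have Rop: "R_op Mg X h = Dop h \<circ> Dop h" for h
    unfolding R_op_def Let_def Dop_def by (rule refl)
  have lamnn: "h \<le> p \<Longrightarrow> j \<ge> 1 \<Longrightarrow> 0 \<le> lam h j" for h j
    using sd unfolding spectral_decomp_def by auto
  define c where "c g' h i j = inner (kappa (Mg g') (X g') h (\<nu> h i)) (\<nu> h j)" for g' h i j
  define A where "A = (\<Sum>h = 0..p. W h * (\<Sum>i = 1..d h. \<Sum>j = 1..d h. (c (1 - g) h i j - c g h i j)\<^sup>2))"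
  define Lam where "Lam = (\<Sum>h = 0..p. W h * (\<Sum>j = 1..d h. lam h j))"
  have delta: "(c (1 - g) h i j - c g h i j)\<^sup>2 = (inner (Dop h (\<nu> h i)) (\<nu> h j))\<^sup>2" for h i j
  proof -
    have "c 0 h i j - c 1 h i j = inner (Dop h (\<nu> h i)) (\<nu> h j)"
      unfolding c_def Dop_def inner_diff_left ..
    moreover have "g = 0 \<or> g = 1" using g1 by auto
    ultimately show ?thesis by (auto simp: power2_commute)
  qed
  have LamA: "Lam \<le> A"
    unfolding Lam_def A_def
  proof (rule sum_mono)
    fix h assume "h \<in> {0..p}"
    hence h: "h \<le> p" by simp
    have "(\<Sum>j = 1..d h. lam h j) \<le> (\<Sum>i = 1..d h. (inner (Dop h (\<nu> h i)) (\<nu> h i))\<^sup>2)"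
    proof (rule sum_mono)
      fix i assume "i \<in> {1..d h}"
      then show "lam h i \<le> (inner (Dop h (\<nu> h i)) (\<nu> h i))\<^sup>2"
        using eigen_bound[OF Dsym Dscale sd[OF h, unfolded Rop]] by simp
    qed
    also have "\<dots> \<le> (\<Sum>i = 1..d h. \<Sum>j = 1..d h. (c (1 - g) h i j - c g h i j)\<^sup>2)"
      unfolding delta
      by (rule sum_mono, rule member_le_sum) auto
    finally show "W h * (\<Sum>j = 1..d h. lam h j) \<le> W h * (\<Sum>i = 1..d h. \<Sum>j = 1..d h. (c (1 - g) h i j - c g h i j)\<^sup>2)"
      using Wpos[OF h] by simp
  qed
  have Lampos: "0 < Lam"
  proof -
    obtain h0 where h0: "h0 \<le> p" "hs_norm (R_op Mg X h0) > 0" using hs by blast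
    have "lam h0 1 \<noteq> 0"
    proof
      assume "lam h0 1 = 0"
      hence "\<And>v. R_op Mg X h0 v = 0" by (rule spec_zero[OF sd[OF h0(1)]])
      hence "hs_norm (R_op Mg X h0) = 0" by (rule hs_zero)
      with h0 show False by simp
    qed
    hence l1: "0 < lam h0 1" using lamnn[OF h0(1), of 1] by simp
    have "lam h0 1 \<le> (\<Sum>j = 1..d h0. lam h0 j)"
      by (rule member_le_sum) (use d1[OF h0(1)] lamnn[OF h0(1)] in auto)
    hence t: "0 < W h0 * (\<Sum>j = 1..d h0. lam h0 j)" using l1 Wpos[OF h0(1)] by simp
    have "W h0 * (\<Sum>j = 1..d h0. lam h0 j) \<le> Lam"
      unfolding Lam_def
      using h0(1) by (intro member_le_sum) (auto intro!: mult_nonneg_nonneg sum_nonneg lamnn less_imp_le[OF Wpos])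
    with t show ?thesis by simp
  qed
  have Z4: "integrable M (\<lambda>\<omega>. norm (Z k \<omega>) ^ 4)" if k: "k \<ge> 1" for k
    by (rule Z4_transfer[OF pM Zm eq]) (use k g1 ws X4 in \<open>auto simp: weakly_stationary_def\<close>)
  define e where "e \<omega> h i j = yfeat p \<nu> (\<lambda>k. Z (m + k) \<omega>) h i j - c g h i j" for \<omega> h i j
  have eL2: "L2 M (\<lambda>\<omega>. e \<omega> h i j)" for h i j
    unfolding e_def
    by (rule L2_diff[OF L2_yfeat[OF P.finite_measure_axioms Zm Z4] L2_const[OF P.finite_measure_axioms]])
  define S where "S \<omega> = (\<Sum>h = 0..p. W h * (\<Sum>i = 1..d h. \<Sum>j = 1..d h. (e \<omega> h i j)\<^sup>2))" for \<omega>
  have Sint: "integrable M S"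
    unfolding S_def using eL2 unfolding L2_def by auto
  have Smeas[measurable]: "S \<in> borel_measurable M" using Sint by auto
  have sig: "sigma M Z m Mg X g p \<nu> h i j = (LINT \<omega>|M. (e \<omega> h i j)\<^sup>2)" for h i j
    unfolding sigma_def e_def c_def ..
  have ES: "(LINT \<omega>|M. S \<omega>) = (\<Sum>h = 0..p. W h * (\<Sum>i = 1..d h. \<Sum>j = 1..d h. sigma M Z m Mg X g p \<nu> h i j))"
    unfolding S_def sig using eL2 unfolding L2_def
    by (simp add: integral_sum integrable_sum)
  have pw: "Lam / 4 \<le> S \<omega>" if err: "oracle_class Mg X W d \<nu> p (\<lambda>k. Z (m + k) \<omega>) \<noteq> g" for \<omega>
  proof -
    let ?y = "\<lambda>h i j. yfeat p \<nu> (\<lambda>k. Z (m + k) \<omega>) h i j"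
    have Dst: "Dstat Mg X W d \<nu> p (\<lambda>k. Z (m + k) \<omega>) g' = (\<Sum>h = 0..p. W h * (\<Sum>i = 1..d h. \<Sum>j = 1..d h. (c g' h i j - ?y h i j)\<^sup>2))" for g'
      unfolding Dstat_def c_def ..
    have le0: "Dstat Mg X W d \<nu> p (\<lambda>k. Z (m + k) \<omega>) (1 - g) \<le> Dstat Mg X W d \<nu> p (\<lambda>k. Z (m + k) \<omega>) g"
    proof -
      have "g = 0 \<or> g = 1" using g1 by auto
      then show ?thesis using err unfolding oracle_class_def by (auto split: if_splits)
    qed
    have "(\<Sum>h = 0..p. W h * (\<Sum>i = 1..d h. \<Sum>j = 1..d h.
            (c (1 - g) h i j - c g h i j)\<^sup>2 / 2 - 2 * (e \<omega> h i j)\<^sup>2 + (c g h i j - ?y h i j)\<^sup>2))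
       \<le> Dstat Mg X W d \<nu> p (\<lambda>k. Z (m + k) \<omega>) (1 - g)"
      unfolding Dst
    proof (rule sum_mono)
      fix h assume "h \<in> {0..p}"
      hence "0 \<le> W h" using Wpos by (simp add: less_imp_le)
      moreover have "(\<Sum>i = 1..d h. \<Sum>j = 1..d h.
            (c (1 - g) h i j - c g h i j)\<^sup>2 / 2 - 2 * (e \<omega> h i j)\<^sup>2 + (c g h i j - ?y h i j)\<^sup>2)
          \<le> (\<Sum>i = 1..d h. \<Sum>j = 1..d h. (c (1 - g) h i j - ?y h i j)\<^sup>2)"
        unfolding e_def by (intro sum_mono pointwise_ineq)
      ultimately show "W h * (\<Sum>i = 1..d h. \<Sum>j = 1..d h.
            (c (1 - g) h i j - c g h i j)\<^sup>2 / 2 - 2 * (e \<omega> h i j)\<^sup>2 + (c g h i j - ?y h i j)\<^sup>2)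
          \<le> W h * (\<Sum>i = 1..d h. \<Sum>j = 1..d h. (c (1 - g) h i j - ?y h i j)\<^sup>2)"
        by - (rule mult_left_mono; assumption)
    qed
    moreover have "(\<Sum>h = 0..p. W h * (\<Sum>i = 1..d h. \<Sum>j = 1..d h.
            (c (1 - g) h i j - c g h i j)\<^sup>2 / 2 - 2 * (e \<omega> h i j)\<^sup>2 + (c g h i j - ?y h i j)\<^sup>2))
        = A / 2 - 2 * S \<omega> + Dstat Mg X W d \<nu> p (\<lambda>k. Z (m + k) \<omega>) g"
      unfolding A_def S_def Dst
      by (simp add: sum.distrib sum_subtractf sum_distrib_left sum_divide_distrib algebra_simps)
    ultimately have "A / 2 - 2 * S \<omega> \<le> 0" using le0 by linarith
    thus ?thesis using LamA by linarith
  qed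
  have sub: "{\<omega> \<in> space M. oracle_class Mg X W d \<nu> p (\<lambda>k. Z (m + k) \<omega>) \<noteq> g}
      \<subseteq> {\<omega> \<in> space M. S \<omega> \<ge> Lam / 4}" using pw by auto
  have Snn: "AE \<omega> in M. 0 \<le> S \<omega>"
    unfolding S_def using Wpos
    by (intro AE_I2 sum_nonneg mult_nonneg_nonneg) (auto simp: less_imp_le)
  have "measure M {\<omega> \<in> space M. oracle_class Mg X W d \<nu> p (\<lambda>k. Z (m + k) \<omega>) \<noteq> g}
      \<le> measure M {\<omega> \<in> space M. S \<omega> \<ge> Lam / 4}"
    by (rule P.finite_measure_mono[OF sub]) measurable
  also have "\<dots> \<le> (LINT \<omega>|M. S \<omega>) / (Lam / 4)"
    by (rule integral_Markov_inequality_measure[OF Sint _ Snn]) (use Lampos in auto)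
  also have "\<dots> = 4 * (\<Sum>h = 0..p. W h * (\<Sum>i = 1..d h. \<Sum>j = 1..d h. sigma M Z m Mg X g p \<nu> h i j))
                  / (\<Sum>h = 0..p. W h * (\<Sum>j = 1..d h. lam h j))"
    unfolding ES Lam_def by simp
  finally have b1: "measure M {\<omega> \<in> space M. oracle_class Mg X W d \<nu> p (\<lambda>k. Z (m + k) \<omega>) \<noteq> g} \<le> 4 * (\<Sum>h = 0..p. W h * (\<Sum>i = 1..d h. \<Sum>j = 1..d h. sigma M Z m Mg X g p \<nu> h i j))
                  / (\<Sum>h = 0..p. W h * (\<Sum>j = 1..d h. lam h j))" .
  have b2: "measure M {\<omega> \<in> space M. oracle_class Mg X W d \<nu> p (\<lambda>k. Z (m + k) \<omega>) \<noteq> g} \<le> 1"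
    by (rule P.prob_le_1)
  from b1 b2 show ?thesis by simp
qed

end
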